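(* Let $G=(V,E)$ be a simple graph on vertices $V=\{1,\dots,n\}$, let $d_j$ denote the degree of vertex $j$, and let $\lambda$ be a real number. On $n$ qubits define $$\hat C=-\sum_{i=1}^n\big(\sigma^{(z)}_i+I\big)+\lambda\sum_{\{i,j\}\in E}\big(\sigma^{(z)}_i+I\big)\big(\sigma^{(z)}_j+I\big),\qquad \hat B=-\sum_{i=1}^n\sigma^{(x)}_i,$$ and $\ket{\varphi_0}=2^{-n/2}\sum_{z\in\{-1,1\}^n}\ket{z}$ (the uniform superposition over computational basis states). For real $\beta,\gamma$ let $\ket{\psi(\beta,\gamma)}=e^{-i\beta\hat B}e^{-i\gamma\hat C}\ket{\varphi_0}$. Then for every vertex $j$, $$J_j(\beta,\gamma):=\bra{\psi(\beta,\gamma)}\sigma^{(z)}_j\ket{\psi(\beta,\gamma)}=\sin(2\beta)\,\big(\cos(2\gamma\lambda)\big)^{d_j}\,\sin\!\big(2\gamma(1-d_j\lambda)\big).$$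
   Context: $\sigma^{(x)}_i,\sigma^{(z)}_i$ denote the Pauli $X$ and $Z$ matrices acting on qubit $i$ (identity elsewhere), and $I$ is the identity. Computational basis states $\ket{z}$, $z\in\{-1,1\}^n$, are labeled by the eigenvalues of the $\sigma^{(z)}_i$. $\hat C$ is the Hamiltonian encoding of the Maximum Independent Set penalized cost under $x_i\mapsto\frac12(I+\sigma^{(z)}_i)$; $\ket{\psi(\beta,\gamma)}$ is the depth-one QAOA state. *)

theory Defs
  imports "HOL-Analysis.Analysis"
begin

text \<open>Qubits are indexed by a finite linearly ordered type 'n (the vertex set).
  A computational basis state is z :: 'n \<Rightarrow> bool; its label in {-1,1}^n is
  given by spin (z i) (True = +1, False = -1), i.e. the eigenvalue of sigma_z on qubit i.
  Operators on the 2^n dimensional space are given by their matrix entries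
  A z w = <z|A|w>; states by their amplitudes.\<close>

type_synonym 'n qop = "('n \<Rightarrow> bool) \<Rightarrow> ('n \<Rightarrow> bool) \<Rightarrow> complex"
type_synonym 'n qstate = "('n \<Rightarrow> bool) \<Rightarrow> complex"

definition spin :: "bool \<Rightarrow> complex" where
  "spin b = (if b then 1 else -1)"

definition op_id :: "'n::finite qop" where
  "op_id z w = (if z = w then 1 else 0)"

definition op_add :: "'n::finite qop \<Rightarrow> 'n qop \<Rightarrow> 'n qop" where
  "op_add A B z w = A z w + B z w"

definition op_scale :: "complex \<Rightarrow> 'n::finite qop \<Rightarrow> 'n qop" where
  "op_scale c A z w = c * A z w"

definition op_sum :: "('i \<Rightarrow> 'n::finite qop) \<Rightarrow> 'i set \<Rightarrow> 'n qop" where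
  "op_sum F S z w = (\<Sum>i\<in>S. F i z w)"

definition op_mult :: "'n::finite qop \<Rightarrow> 'n qop \<Rightarrow> 'n qop" where
  "op_mult A B z w = (\<Sum>u\<in>UNIV. A z u * B u w)"

primrec op_pow :: "'n::finite qop \<Rightarrow> nat \<Rightarrow> 'n qop" where
  "op_pow A 0 = op_id"
| "op_pow A (Suc k) = op_mult A (op_pow A k)"

definition op_exp :: "'n::finite qop \<Rightarrow> 'n qop" where
  "op_exp A z w = (\<Sum>k. op_pow A k z w / of_nat (fact k))"

definition op_apply :: "'n::finite qop \<Rightarrow> 'n qstate \<Rightarrow> 'n qstate" where
  "op_apply A v z = (\<Sum>w\<in>UNIV. A z w * v w)"

definition expect :: "'n::finite qstate \<Rightarrow> 'n qop \<Rightarrow> complex" where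
  "expect \<psi> A = (\<Sum>z\<in>UNIV. \<Sum>w\<in>UNIV. cnj (\<psi> z) * A z w * \<psi> w)"

definition sigma_z :: "'n \<Rightarrow> 'n::finite qop" where
  "sigma_z i z w = (if z = w then spin (z i) else 0)"

definition sigma_x :: "'n \<Rightarrow> 'n::finite qop" where
  "sigma_x i z w = (if z = w(i := \<not> w i) then 1 else 0)"

definition simple_graph :: "'n set set \<Rightarrow> bool" where
  "simple_graph E \<longleftrightarrow> (\<forall>e\<in>E. card e = 2)"

definition degree :: "'n set set \<Rightarrow> 'n \<Rightarrow> nat" where
  "degree E j = card {e\<in>E. j \<in> e}"

definition mis_C :: "'n::{finite,linorder} set set \<Rightarrow> real \<Rightarrow> 'n qop" where
  "mis_C E lam = op_add
     (op_scale (-1) (op_sum (\<lambda>i. op_add (sigma_z i) op_id) UNIV))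
     (op_scale (complex_of_real lam)
        (op_sum (\<lambda>e. op_mult (op_add (sigma_z (Min e)) op_id) (op_add (sigma_z (Max e)) op_id)) E))"

definition mix_B :: "'n::finite qop" where
  "mix_B = op_scale (-1) (op_sum sigma_x UNIV)"

definition phi0 :: "'n::finite qstate" where
  "phi0 z = complex_of_real (2 powr (- real CARD('n) / 2))"

definition qaoa_state :: "'n::{finite,linorder} set set \<Rightarrow> real \<Rightarrow> real \<Rightarrow> real \<Rightarrow> 'n qstate" where
  "qaoa_state E lam \<beta> \<gamma> =
     op_apply (op_exp (op_scale (- \<i> * complex_of_real \<beta>) mix_B))
       (op_apply (op_exp (op_scale (- \<i> * complex_of_real \<gamma>) (mis_C E lam))) phi0)"

end

theory Submission
  imports Defs "HOL-Library.FuncSet"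
begin


lemma sum_prod_fun:
  fixes f :: "'n::finite \<Rightarrow> bool \<Rightarrow> 'c::comm_semiring_1"
  shows "(\<Sum>w\<in>UNIV. \<Prod>i\<in>UNIV. f i (w i)) = (\<Prod>i\<in>UNIV. f i True + f i False)"
proof -
  have "(\<Prod>i\<in>UNIV. f i True + f i False) = (\<Prod>i\<in>UNIV. \<Sum>b\<in>UNIV. f i b)"
    by (simp add: UNIV_bool add.commute)
  also have "\<dots> = (\<Sum>g\<in>PiE UNIV (\<lambda>_. UNIV). \<Prod>i\<in>UNIV. f i (g i))"
    by (rule prod_sum_PiE) auto
  also have "PiE UNIV (\<lambda>_. UNIV) = (UNIV :: ('n \<Rightarrow> bool) set)" by auto
  finally show ?thesis by simp
qed



definition isdiag :: "'n::finite qop \<Rightarrow> (('n \<Rightarrow> bool) \<Rightarrow> complex) \<Rightarrow> bool" where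
  "isdiag A a \<longleftrightarrow> (\<forall>z w. A z w = (if z = w then a w else 0))"

lemma op_mult_diag:
  assumes "isdiag A a" "isdiag B b" shows "isdiag (op_mult A B) (\<lambda>w. a w * b w)"
proof -
  have a: "A z u = (if z = u then a u else 0)" and b: "B z u = (if z = u then b u else 0)" for z u
    using assms unfolding isdiag_def by blast+
  show ?thesis unfolding isdiag_def op_mult_def a b
    by (auto simp: if_distrib[where f="\<lambda>x. x * _"] cong: if_cong)
qed

lemma op_pow_diag:
  assumes "isdiag A a" shows "isdiag (op_pow A k) (\<lambda>w. a w ^ k)"
proof (induction k)
  case 0 then show ?case by (simp add: isdiag_def op_id_def)
next
  case (Suc k) then show ?case using op_mult_diag[OF assms Suc] by simp
qed

lemma exp_sums_c: "(\<lambda>n. x^n / of_nat (fact n)) sums exp (x::complex)"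
  using exp_converges[of x] by (simp add: scaleR_conv_of_real divide_inverse mult.commute)

lemma op_exp_diag:
  assumes "isdiag A a" shows "isdiag (op_exp A) (\<lambda>w. exp (a w))"
  unfolding isdiag_def op_exp_def
proof (intro allI)
  fix z w
  have p: "op_pow A k z w = (if z = w then a w ^ k else 0)" for k
    using op_pow_diag[OF assms, of k] unfolding isdiag_def by blast
  show "(\<Sum>k. op_pow A k z w / of_nat (fact k)) = (if z = w then exp (a w) else 0)"
    using sums_unique[OF exp_sums_c[of "a w"]] by (simp add: p)
qed

lemma diag_add: "isdiag A a \<Longrightarrow> isdiag B b \<Longrightarrow> isdiag (op_add A B) (\<lambda>w. a w + b w)"
  by (auto simp: isdiag_def op_add_def)
lemma diag_scale: "isdiag A a \<Longrightarrow> isdiag (op_scale c A) (\<lambda>w. c * a w)"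
  by (auto simp: isdiag_def op_scale_def)
lemma diag_sum: "(\<And>i. i \<in> S \<Longrightarrow> isdiag (F i) (f i)) \<Longrightarrow> isdiag (op_sum F S) (\<lambda>w. \<Sum>i\<in>S. f i w)"
  by (auto simp: isdiag_def op_sum_def)
lemma diag_z: "isdiag (sigma_z i) (\<lambda>w. spin (w i))"
  by (auto simp: isdiag_def sigma_z_def)
lemma diag_id: "isdiag op_id (\<lambda>w. 1)"
  by (auto simp: isdiag_def op_id_def)

definition cC :: "'n::{finite,linorder} set set \<Rightarrow> real \<Rightarrow> ('n \<Rightarrow> bool) \<Rightarrow> complex" where
  "cC E lam w = -1 * (\<Sum>i\<in>UNIV. spin (w i) + 1) +
      complex_of_real lam * (\<Sum>e\<in>E. (spin (w (Min e)) + 1) * (spin (w (Max e)) + 1))"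

lemma diag_C: "isdiag (mis_C E lam) (cC E lam)"
  unfolding mis_C_def cC_def
  by (intro diag_add diag_scale diag_sum op_mult_diag diag_z diag_id)



definition hh :: "bool \<Rightarrow> bool \<Rightarrow> complex" where "hh a b = (if a \<and> b then -1 else 1)"
definition Hd :: "('n::finite \<Rightarrow> bool) \<Rightarrow> ('n \<Rightarrow> bool) \<Rightarrow> complex" where
  "Hd z u = (\<Prod>i\<in>UNIV. hh (z i) (u i))"
definition sg :: "bool \<Rightarrow> complex" where "sg b = (if b then -1 else 1)"
definition dd :: "('n::finite \<Rightarrow> bool) \<Rightarrow> complex" where "dd u = (\<Sum>i\<in>UNIV. sg (u i))"

lemma if_mult: "(if P then 1 else 0) * (x::complex) = (if P then x else 0)" by simp

lemma op_mult_assoc: "op_mult (op_mult A B) C = op_mult A (op_mult B C)"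
  unfolding op_mult_def sum_distrib_right sum_distrib_left
  by (intro ext, subst sum.swap) (simp add: mult.assoc)

lemma flip_iff: "(z = v(i := \<not> v i)) \<longleftrightarrow> (v = z(i := \<not> z i))"
  by (auto simp: fun_eq_iff)

lemma Hd_flip: "Hd (z(i := \<not> z i)) u = sg (u i) * Hd z u"
proof -
  have "Hd (z(i := \<not> z i)) u = hh (\<not> z i) (u i) * (\<Prod>k\<in>UNIV-{i}. hh (z k) (u k))"
    unfolding Hd_def by (subst prod.remove[of _ i]) (auto intro!: prod.cong)
  also have "\<dots> = sg (u i) * (hh (z i) (u i) * (\<Prod>k\<in>UNIV-{i}. hh (z k) (u k)))"
    by (simp add: hh_def sg_def)
  also have "\<dots> = sg (u i) * Hd z u"
    unfolding Hd_def by (subst (2) prod.remove[of _ i]) auto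
  finally show ?thesis .
qed

lemma XH: "op_mult (op_sum sigma_x UNIV) Hd z u = dd u * Hd z u"
proof -
  have "op_mult (op_sum sigma_x UNIV) Hd z u = (\<Sum>i\<in>UNIV. \<Sum>v\<in>UNIV. (if v = z(i := \<not> z i) then Hd v u else 0))"
    unfolding op_mult_def op_sum_def sigma_x_def flip_iff sum_distrib_right
    by (subst sum.swap) (simp add: if_mult)
  also have "\<dots> = (\<Sum>i\<in>UNIV. Hd (z(i := \<not> z i)) u)" by simp
  also have "\<dots> = dd u * Hd z u" by (simp add: Hd_flip dd_def sum_distrib_right)
  finally show ?thesis .
qed

lemma XkH: "op_mult (op_pow (op_sum sigma_x UNIV) k) Hd z u = dd u ^ k * Hd z u"
proof (induction k arbitrary: z)
  case 0 then show ?case by (simp add: op_mult_def op_id_def if_mult)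
next
  case (Suc k)
  have "op_mult (op_pow (op_sum sigma_x UNIV) (Suc k)) Hd z u
      = op_mult (op_sum sigma_x UNIV) (op_mult (op_pow (op_sum sigma_x UNIV) k) Hd) z u"
    by (simp add: op_mult_assoc)
  also have "\<dots> = (\<Sum>v\<in>UNIV. op_sum sigma_x UNIV z v * (dd u ^ k * Hd v u))"
    unfolding op_mult_def[of _ "op_mult _ Hd"] Suc ..
  also have "\<dots> = dd u ^ k * op_mult (op_sum sigma_x UNIV) Hd z u"
    unfolding op_mult_def[of _ Hd] sum_distrib_left by (simp only: mult.left_commute)
  also have "\<dots> = dd u ^ Suc k * Hd z u" by (simp add: XH)
  finally show ?case .
qed

lemma HH: "op_mult Hd Hd z w = (if z = w then 2 ^ CARD('n) else 0)" for z w :: "'n::finite \<Rightarrow> bool"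
proof -
  have "op_mult Hd Hd z w = (\<Sum>u\<in>UNIV. \<Prod>i\<in>UNIV. hh (z i) (u i) * hh (u i) (w i))"
    unfolding op_mult_def Hd_def by (simp add: prod.distrib)
  also have "\<dots> = (\<Prod>i\<in>UNIV. hh (z i) True * hh True (w i) + hh (z i) False * hh False (w i))"
    by (rule sum_prod_fun)
  also have "\<dots> = (\<Prod>i\<in>UNIV. if z i = w i then 2 else 0)"
    by (intro prod.cong) (auto simp: hh_def)
  also have "\<dots> = (if z = w then 2 ^ CARD('n) else 0)"
  proof (cases "z = w")
    case True then show ?thesis by simp
  next
    case False then obtain i where "z i \<noteq> w i" by auto
    then show ?thesis using False by (intro trans[OF prod_zero]) auto
  qed
  finally show ?thesis .
qed

lemma powX: "op_pow (op_sum sigma_x UNIV) k z w =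
   (\<Sum>u\<in>UNIV. Hd z u * dd u ^ k * Hd u w) / 2 ^ CARD('n)" for z w :: "'n::finite \<Rightarrow> bool"
proof -
  let ?P = "op_pow (op_sum sigma_x UNIV) k :: 'n qop"
  have "(\<Sum>u\<in>UNIV. Hd z u * dd u ^ k * Hd u w) = op_mult (op_mult ?P Hd) Hd z w"
    unfolding op_mult_def[of "op_mult ?P Hd" Hd] XkH by (simp only: mult.commute)
  also have "\<dots> = op_mult ?P (op_mult Hd Hd) z w" by (simp add: op_mult_assoc)
  also have "\<dots> = ?P z w * 2 ^ CARD('n)"
    unfolding op_mult_def[of ?P] HH by (simp add: if_distrib[where f="\<lambda>x. _ * x"] cong: if_cong)
  finally show ?thesis by simp
qed

lemma pow_scale: "op_pow (op_scale c A) k z w = c ^ k * op_pow A k z w"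
proof (induction k arbitrary: z)
  case 0 then show ?case by simp
next
  case (Suc k)
  have "op_pow (op_scale c A) (Suc k) z w = (\<Sum>u\<in>UNIV. (c * A z u) * (c ^ k * op_pow A k u w))"
    by (simp add: op_mult_def op_scale_def Suc)
  also have "\<dots> = c ^ Suc k * op_pow A (Suc k) z w"
    by (simp add: op_mult_def sum_distrib_left mult_ac)
  finally show ?case .
qed

lemma expX: "op_exp (op_scale c (op_sum sigma_x UNIV)) z w =
   (\<Sum>u\<in>UNIV. Hd z u * exp (c * dd u) * Hd u w) / 2 ^ CARD('n)" for z w :: "'n::finite \<Rightarrow> bool"
proof -
  have "(\<lambda>k. \<Sum>u\<in>UNIV. Hd z u * Hd u w / 2 ^ CARD('n) * ((c * dd u) ^ k / of_nat (fact k)))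
     sums (\<Sum>u\<in>UNIV. Hd z u * Hd u w / 2 ^ CARD('n) * exp (c * dd u))"
    by (intro sums_sum sums_mult exp_sums_c)
  moreover have "(\<lambda>k. \<Sum>u\<in>UNIV. Hd z u * Hd u w / 2 ^ CARD('n) * ((c * dd u) ^ k / of_nat (fact k)))
     = (\<lambda>k. op_pow (op_scale c (op_sum sigma_x UNIV)) k z w / of_nat (fact k))"
    by (intro ext) (simp add: pow_scale powX sum_divide_distrib sum_distrib_left power_mult_distrib
        mult.commute mult.left_commute)
  ultimately show ?thesis unfolding op_exp_def
    by (simp add: sums_unique[symmetric] sum_divide_distrib mult.commute mult.left_commute)
qed

lemma test: "True" by simp


definition ub :: "real \<Rightarrow> bool \<Rightarrow> bool \<Rightarrow> complex" where
  "ub \<beta> a b = (if a = b then complex_of_real (cos \<beta>) else \<i> * complex_of_real (sin \<beta>))"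

lemma scaleB: "op_scale (- \<i> * complex_of_real \<beta>) mix_B = op_scale (\<i> * complex_of_real \<beta>) (op_sum sigma_x UNIV)"
  by (intro ext) (simp add: mix_B_def op_scale_def)

lemma UB: "op_exp (op_scale (- \<i> * complex_of_real \<beta>) mix_B) z w = (\<Prod>i\<in>UNIV. ub \<beta> (z i) (w i))"
  for z w :: "'n::finite \<Rightarrow> bool"
proof -
  define c where "c = \<i> * complex_of_real \<beta>"
  define f where "f i = hh (z i) True * exp (c * sg True) * hh True (w i) + hh (z i) False * exp (c * sg False) * hh False (w i)" for i
  have "(\<Sum>u\<in>UNIV. Hd z u * exp (c * dd u) * Hd u w) = (\<Sum>u\<in>UNIV. \<Prod>i\<in>UNIV. hh (z i) (u i) * exp (c * sg (u i)) * hh (u i) (w i))"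
    unfolding Hd_def dd_def sum_distrib_left exp_sum[OF finite] prod.distrib ..
  also have "\<dots> = (\<Prod>i\<in>UNIV. f i)" unfolding f_def by (rule sum_prod_fun)
  finally have 1: "(\<Sum>u\<in>UNIV. Hd z u * exp (c * dd u) * Hd u w) / 2 ^ CARD('n) = (\<Prod>i\<in>UNIV. f i / 2)"
    by (simp add: prod_dividef)
  have 2: "f i / 2 = ub \<beta> (z i) (w i)" for i
  proof -
    have cs: "complex_of_real (cos \<beta>) = (exp c + exp (- c)) / 2"
      using cos_exp_eq[of "complex_of_real \<beta>"] unfolding c_def cos_of_real by simp
    have sn: "\<i> * complex_of_real (sin \<beta>) = (exp c - exp (- c)) / 2"
      using sin_exp_eq[of "complex_of_real \<beta>"] unfolding c_def sin_of_real by (simp add: field_simps)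
    show ?thesis unfolding ub_def cs sn f_def by (cases "z i"; cases "w i") (simp_all add: hh_def sg_def)
  qed
  show ?thesis unfolding scaleB expX c_def[symmetric] 1 2 ..
qed



definition UBm :: "real \<Rightarrow> ('n::finite \<Rightarrow> bool) \<Rightarrow> ('n \<Rightarrow> bool) \<Rightarrow> complex" where
  "UBm \<beta> z w = (\<Prod>i\<in>UNIV. ub \<beta> (z i) (w i))"

definition pp :: complex where "pp = complex_of_real (2 powr (- real CARD('n::finite) / 2))"

definition aa :: "'n::{finite,linorder} set set \<Rightarrow> real \<Rightarrow> real \<Rightarrow> ('n \<Rightarrow> bool) \<Rightarrow> complex" where
  "aa E lam \<gamma> w = exp (- \<i> * complex_of_real \<gamma> * cC E lam w) * pp TYPE('n)"

lemma phiC: "op_apply (op_exp (op_scale (- \<i> * complex_of_real \<gamma>) (mis_C E lam))) phi0 w = aa E lam \<gamma> w"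
proof -
  have d: "isdiag (op_exp (op_scale (- \<i> * complex_of_real \<gamma>) (mis_C E lam))) (\<lambda>w. exp (- \<i> * complex_of_real \<gamma> * cC E lam w))"
    by (intro op_exp_diag diag_scale diag_C)
  show ?thesis using d unfolding isdiag_def op_apply_def aa_def phi0_def pp_def
    by (simp add: if_distrib[where f="\<lambda>x. x * _"] cong: if_cong)
qed

lemma psi_eq: "qaoa_state E lam \<beta> \<gamma> z = (\<Sum>w\<in>UNIV. UBm \<beta> z w * aa E lam \<gamma> w)"
proof -
  have f: "op_apply (op_exp (op_scale (- \<i> * complex_of_real \<gamma>) (mis_C E lam))) phi0 = aa E lam \<gamma>"
    by (intro ext phiC)
  show ?thesis unfolding qaoa_state_def f op_apply_def UB UBm_def ..
qed

lemma expect_z: "expect \<psi> (sigma_z j) = (\<Sum>z\<in>UNIV. spin (z j) * (cnj (\<psi> z) * \<psi> z))"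
proof -
  have "(\<Sum>w\<in>UNIV. cnj (\<psi> z) * sigma_z j z w * \<psi> w) = (\<Sum>w\<in>UNIV. if w = z then spin (z j) * (cnj (\<psi> z) * \<psi> z) else 0)" for z
    unfolding sigma_z_def by (intro sum.cong) auto
  then show ?thesis unfolding expect_def by simp
qed

definition KK :: "real \<Rightarrow> 'n::finite \<Rightarrow> ('n \<Rightarrow> bool) \<Rightarrow> ('n \<Rightarrow> bool) \<Rightarrow> complex" where
  "KK \<beta> j w w' = (\<Sum>z\<in>UNIV. spin (z j) * (cnj (UBm \<beta> z w) * UBm \<beta> z w'))"

lemma expand4:
  fixes U :: "('n::finite \<Rightarrow> bool) \<Rightarrow> ('n \<Rightarrow> bool) \<Rightarrow> complex"
  shows "(\<Sum>z\<in>UNIV. s z * (cnj (\<Sum>w\<in>UNIV. U z w * a w) * (\<Sum>w\<in>UNIV. U z w * a w)))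
   = (\<Sum>w\<in>UNIV. \<Sum>w'\<in>UNIV. cnj (a w) * a w' * (\<Sum>z\<in>UNIV. s z * (cnj (U z w) * U z w')))"
proof -
  have "(\<Sum>z\<in>UNIV. s z * (cnj (\<Sum>w\<in>UNIV. U z w * a w) * (\<Sum>w\<in>UNIV. U z w * a w)))
     = (\<Sum>z\<in>UNIV. \<Sum>w\<in>UNIV. \<Sum>w'\<in>UNIV. cnj (a w) * a w' * (s z * (cnj (U z w) * U z w')))"
    by (simp add: cnj_sum sum_product sum_distrib_left mult_ac)
  also have "\<dots> = (\<Sum>w\<in>UNIV. \<Sum>z\<in>UNIV. \<Sum>w'\<in>UNIV. cnj (a w) * a w' * (s z * (cnj (U z w) * U z w')))"
    by (rule sum.swap)
  also have "\<dots> = (\<Sum>w\<in>UNIV. \<Sum>w'\<in>UNIV. \<Sum>z\<in>UNIV. cnj (a w) * a w' * (s z * (cnj (U z w) * U z w')))"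
    by (rule sum.cong[OF refl], rule sum.swap)
  finally show ?thesis by (simp add: sum_distrib_left)
qed

lemma expect_K: "expect (qaoa_state E lam \<beta> \<gamma>) (sigma_z j) =
   (\<Sum>w\<in>UNIV. \<Sum>w'\<in>UNIV. cnj (aa E lam \<gamma> w) * aa E lam \<gamma> w' * KK \<beta> j w w')"
  unfolding expect_z psi_eq KK_def by (rule expand4)



definition kj :: "real \<Rightarrow> bool \<Rightarrow> bool \<Rightarrow> complex" where
  "kj \<beta> b b' = cnj (ub \<beta> True b) * ub \<beta> True b' - cnj (ub \<beta> False b) * ub \<beta> False b'"

lemma ub_pair: "cnj (ub \<beta> True b) * ub \<beta> True b' + cnj (ub \<beta> False b) * ub \<beta> False b' = (if b = b' then 1 else 0)"
proof -
  have 1: "complex_of_real (cos \<beta>) * complex_of_real (cos \<beta>) + complex_of_real (sin \<beta>) * complex_of_real (sin \<beta>) = 1"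
    unfolding of_real_mult[symmetric] of_real_add[symmetric] sin_cos_squared_add3 by simp
  show ?thesis using 1 by (cases b; cases b') (auto simp: ub_def algebra_simps)
qed

lemma prod_indic: "(\<Prod>i\<in>A. if P i then 1 else (0::complex)) = (if (\<forall>i\<in>A. P i) then 1 else 0)"
  if "finite A" using that by (induction A rule: finite_induct) auto

lemma KK_eq: "KK \<beta> j w w' = (if w' = w then kj \<beta> (w j) (w j) else 0) + (if w' = w(j := \<not> w j) then kj \<beta> (w j) (\<not> w j) else 0)"
proof -
  define f where "f i a = (if i = j then spin a else 1) * (cnj (ub \<beta> a (w i)) * ub \<beta> a (w' i))" for i a
  have "KK \<beta> j w w' = (\<Sum>z\<in>UNIV. \<Prod>i\<in>UNIV. f i (z i))"
    unfolding KK_def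
  proof (rule sum.cong[OF refl])
    fix z :: "'a \<Rightarrow> bool"
    have "spin (z j) = (\<Prod>i\<in>UNIV. if i = j then spin (z i) else 1)" by simp
    then show "spin (z j) * (cnj (UBm \<beta> z w) * UBm \<beta> z w') = (\<Prod>i\<in>UNIV. f i (z i))"
      unfolding f_def UBm_def cnj_prod prod.distrib by simp
  qed
  also have "\<dots> = (\<Prod>i\<in>UNIV. f i True + f i False)" by (rule sum_prod_fun)
  also have "\<dots> = (\<Prod>i\<in>UNIV. if i = j then kj \<beta> (w i) (w' i) else (if w i = w' i then 1 else 0))"
    using ub_pair by (intro prod.cong) (auto simp: f_def kj_def spin_def)
  also have "\<dots> = kj \<beta> (w j) (w' j) * (\<Prod>i\<in>UNIV-{j}. if w i = w' i then 1 else 0)"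
    by (subst prod.remove[of _ j]) (auto intro!: prod.cong)
  also have "\<dots> = kj \<beta> (w j) (w' j) * (if (\<forall>i\<in>UNIV-{j}. w i = w' i) then 1 else 0)"
    by (simp add: prod_indic)
  also have "\<dots> = (if w' = w then kj \<beta> (w j) (w j) else 0) + (if w' = w(j := \<not> w j) then kj \<beta> (w j) (\<not> w j) else 0)"
  proof (cases "\<forall>i\<in>UNIV-{j}. w i = w' i")
    case True
    show ?thesis
    proof (cases "w' j = w j")
      case T2: True
      have "w' = w" using True T2 by (intro ext) (metis DiffI UNIV_I singletonD)
      moreover have "w \<noteq> w(j := \<not> w j)" by (metis fun_upd_same)
      ultimately show ?thesis using True by simp
    next
      case F2: False
      have "w' = w(j := \<not> w j)" using True F2 by (intro ext) (metis (full_types) DiffI UNIV_I fun_upd_apply singletonD)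
      moreover have "w \<noteq> w(j := \<not> w j)" by (metis fun_upd_same)
      ultimately show ?thesis using True F2 by auto
    qed
  next
    case False
    then have "w' \<noteq> w" "w' \<noteq> w(j := \<not> w j)" by auto
    then show ?thesis by (subst if_not_P[OF False]) simp
  qed
  finally show ?thesis .
qed

lemma sum_KK: "(\<Sum>w'\<in>UNIV. g w' * KK \<beta> j w w') = g w * kj \<beta> (w j) (w j) + g (w(j := \<not> w j)) * kj \<beta> (w j) (\<not> w j)"
  unfolding KK_eq distrib_left sum.distrib
  by (simp add: if_distrib[where f="\<lambda>x. _ * x"] cong: if_cong)



definition oth :: "'n::linorder \<Rightarrow> 'n set \<Rightarrow> 'n" where
  "oth j e = (if Min e = j then Max e else Min e)"

definition Dd :: "bool \<Rightarrow> complex" where "Dd b = spin b - spin (\<not> b)"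

definition PP :: "('n::{finite,linorder} \<Rightarrow> bool) \<Rightarrow> 'n set \<Rightarrow> complex" where
  "PP w e = (spin (w (Min e)) + 1) * (spin (w (Max e)) + 1)"

lemma edge_shape:
  fixes e :: "'n::{finite,linorder} set"
  assumes "card e = 2"
  obtains x y where "e = {x, y}" "x < y" "Min e = x" "Max e = y"
proof -
  obtain a b where ab: "a \<noteq> b" "e = {a, b}" using assms by (auto simp: card_2_iff)
  show ?thesis
  proof (cases "a < b")
    case True then show ?thesis using ab by (intro that[of a b]) auto
  next
    case False then have "b < a" using ab by auto
    then show ?thesis using ab by (intro that[of b a]) auto
  qed
qed

lemma edge_oth:
  fixes e :: "'n::{finite,linorder} set"
  assumes "card e = 2" "j \<in> e"
  shows "e = {j, oth j e}" "oth j e \<noteq> j"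
proof -
  obtain x y where "e = {x, y}" "x < y" "Min e = x" "Max e = y" using edge_shape[OF assms(1)] .
  then show "e = {j, oth j e}" "oth j e \<noteq> j" using assms(2) by (auto simp: oth_def)
qed

lemma PP_diff:
  fixes e :: "'n::{finite,linorder} set"
  assumes "card e = 2"
  shows "PP w e - PP (w(j := \<not> w j)) e = (if j \<in> e then Dd (w j) * (spin (w (oth j e)) + 1) else 0)"
proof -
  obtain x y where "e = {x, y}" "x < y" "Min e = x" "Max e = y" using edge_shape[OF assms(1)] .
  then show ?thesis unfolding PP_def Dd_def oth_def
    by (cases "j = x"; cases "j = y") (auto simp: algebra_simps)
qed

lemma alg1: "(-1*a + l*b) - (-1*a' + l*b') = -(a - a') + l*(b-b')" for a b a' b' l :: complex
  by (simp add: algebra_simps)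
lemma alg2: "- d + l * (d * s) = d * (-1 + l * s)" for d l s :: complex
  by (simp add: algebra_simps)

lemma cC_diff:
  fixes E :: "'n::{finite,linorder} set set"
  assumes "simple_graph E"
  shows "cC E lam w - cC E lam (w(j := \<not> w j)) =
    Dd (w j) * (-1 + complex_of_real lam * (\<Sum>k\<in>oth j ` {e\<in>E. j \<in> e}. spin (w k) + 1))"
proof -
  let ?w' = "w(j := \<not> w j)"
  have v: "(\<Sum>i\<in>UNIV. spin (w i) + 1) - (\<Sum>i\<in>UNIV. spin (?w' i) + 1) = Dd (w j)"
  proof -
    have "(\<Sum>i\<in>UNIV. spin (w i) + 1) - (\<Sum>i\<in>UNIV. spin (?w' i) + 1) = (\<Sum>i\<in>UNIV. if i = j then Dd (w j) else 0)"
      unfolding sum_subtractf[symmetric] by (intro sum.cong) (auto simp: Dd_def)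
    then show ?thesis by simp
  qed
  have "(\<Sum>e\<in>E. PP w e) - (\<Sum>e\<in>E. PP ?w' e) = (\<Sum>e\<in>E. if j \<in> e then Dd (w j) * (spin (w (oth j e)) + 1) else 0)"
    unfolding sum_subtractf[symmetric] using assms unfolding simple_graph_def
    by (intro sum.cong) (auto simp: PP_diff)
  also have "\<dots> = (\<Sum>e\<in>{e\<in>E. j \<in> e}. Dd (w j) * (spin (w (oth j e)) + 1))"
    by (simp add: sum.inter_filter)
  also have "\<dots> = Dd (w j) * (\<Sum>k\<in>oth j ` {e\<in>E. j \<in> e}. spin (w k) + 1)"
  proof -
    have "inj_on (oth j) {e\<in>E. j \<in> e}"
    proof (rule inj_onI)
      fix e1 e2 assume "e1 \<in> {e\<in>E. j \<in> e}" "e2 \<in> {e\<in>E. j \<in> e}" "oth j e1 = oth j e2"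
      then have "card e1 = 2" "card e2 = 2" "j \<in> e1" "j \<in> e2" using assms unfolding simple_graph_def by auto
    then have "e1 = {j, oth j e1}" "e2 = {j, oth j e2}" using edge_oth(1) by blast+
    then show "e1 = e2" using \<open>oth j e1 = oth j e2\<close> by simp
    qed
    then show ?thesis by (simp add: sum.reindex sum_distrib_left)
  qed
  finally have ed: "(\<Sum>e\<in>E. PP w e) - (\<Sum>e\<in>E. PP ?w' e) = Dd (w j) * (\<Sum>k\<in>oth j ` {e\<in>E. j \<in> e}. spin (w k) + 1)" .
  have "cC E lam w - cC E lam ?w' = - ((\<Sum>i\<in>UNIV. spin (w i) + 1) - (\<Sum>i\<in>UNIV. spin (?w' i) + 1))
      + complex_of_real lam * ((\<Sum>e\<in>E. PP w e) - (\<Sum>e\<in>E. PP ?w' e))"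
    unfolding cC_def PP_def[symmetric] by (rule alg1)
  also have "\<dots> = Dd (w j) * (-1 + complex_of_real lam * (\<Sum>k\<in>oth j ` {e\<in>E. j \<in> e}. spin (w k) + 1))"
    unfolding v ed by (rule alg2)
  finally show ?thesis .
qed

lemma N_props:
  fixes E :: "'n::{finite,linorder} set set"
  assumes "simple_graph E"
  shows "j \<notin> oth j ` {e\<in>E. j \<in> e}" "card (oth j ` {e\<in>E. j \<in> e}) = degree E j"
proof -
  show "j \<notin> oth j ` {e\<in>E. j \<in> e}"
  proof
    assume "j \<in> oth j ` {e\<in>E. j \<in> e}"
    then obtain e where e: "e \<in> E" "j \<in> e" "j = oth j e" by auto
    then have "card e = 2" using assms unfolding simple_graph_def by auto
    with edge_oth(2)[OF this e(2)] e(3) show False by simp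
  qed
  have "inj_on (oth j) {e\<in>E. j \<in> e}"
  proof (rule inj_onI)
    fix e1 e2 assume "e1 \<in> {e\<in>E. j \<in> e}" "e2 \<in> {e\<in>E. j \<in> e}" "oth j e1 = oth j e2"
    then have "card e1 = 2" "card e2 = 2" "j \<in> e1" "j \<in> e2" using assms unfolding simple_graph_def by auto
    then have "e1 = {j, oth j e1}" "e2 = {j, oth j e2}" using edge_oth(1) by blast+
    then show "e1 = e2" using \<open>oth j e1 = oth j e2\<close> by simp
  qed
  then show "card (oth j ` {e\<in>E. j \<in> e}) = degree E j" by (simp add: card_image degree_def)
qed



lemma cnj_spin[simp]: "cnj (spin b) = spin b" by (simp add: spin_def)

lemma cC_real: "cnj (cC E lam w) = cC E lam w"
  by (simp add: cC_def)

lemma pp2: "cnj (pp TYPE('n::finite)) * pp TYPE('n) = (1/2) ^ CARD('n)"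
proof -
  define r where "r = (2::real) powr (- real CARD('n) / 2)"
  have "r * r = 2 powr (- real CARD('n))" unfolding r_def by (simp add: powr_add[symmetric])
  also have "\<dots> = (1/2) ^ CARD('n)" by (simp add: powr_minus powr_realpow power_one_over inverse_eq_divide)
  finally have "r * r = (1/2) ^ CARD('n)" .
  then have "complex_of_real (r * r) = (1/2) ^ CARD('n)" by simp
  then show ?thesis unfolding pp_def r_def[symmetric] by simp
qed

lemma aa_prod: "cnj (aa E lam \<gamma> w) * aa E lam \<gamma> w' =
   (1/2) ^ CARD('n) * exp (\<i> * complex_of_real \<gamma> * (cC E lam w - cC E lam w'))"
  for w w' :: "'n::{finite,linorder} \<Rightarrow> bool"
proof -
  have "cnj (aa E lam \<gamma> w) * aa E lam \<gamma> w' = (cnj (pp TYPE('n)) * pp TYPE('n)) *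
     (exp (\<i> * complex_of_real \<gamma> * cC E lam w) * exp (- \<i> * complex_of_real \<gamma> * cC E lam w'))"
    unfolding aa_def by (simp add: exp_cnj cC_real mult_ac)
  also have "\<dots> = (1/2) ^ CARD('n) * exp (\<i> * complex_of_real \<gamma> * (cC E lam w - cC E lam w'))"
    unfolding pp2 exp_add[symmetric] by (simp add: algebra_simps)
  finally show ?thesis .
qed

lemma kj_TT_FF: "kj \<beta> True True + kj \<beta> False False = 0"
  by (simp add: kj_def ub_def)

lemma kj_TF: "kj \<beta> True False = \<i> * complex_of_real (sin (2 * \<beta>))"
  unfolding sin_double by (simp add: kj_def ub_def algebra_simps)
lemma kj_FT: "kj \<beta> False True = - \<i> * complex_of_real (sin (2 * \<beta>))"
  unfolding sin_double by (simp add: kj_def ub_def algebra_simps)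

lemma first_zero: "(\<Sum>w\<in>(UNIV::('n::finite \<Rightarrow> bool) set). c * kj \<beta> (w j) (w j)) = 0"
proof -
  have "(\<Sum>w\<in>(UNIV::('n \<Rightarrow> bool) set). kj \<beta> (w j) (w j)) = (\<Sum>w\<in>UNIV. \<Prod>i\<in>UNIV. if i = j then kj \<beta> (w i) (w i) else 1)"
    by simp
  also have "\<dots> = (\<Prod>i\<in>UNIV. (if i = j then kj \<beta> True True else 1) + (if i = j then kj \<beta> False False else 1))"
    by (rule sum_prod_fun)
  also have "\<dots> = 0" by (rule prod_zero) (auto intro!: bexI[of _ j] simp: kj_TT_FF)
  finally show ?thesis by (simp add: sum_distrib_left[symmetric])
qed

lemma half_angle: "(exp (\<i> * complex_of_real t * 2) + 1) / 2 = exp (\<i> * complex_of_real t) * complex_of_real (cos t)"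
proof -
  have "complex_of_real (cos t) = (exp (\<i> * complex_of_real t) + exp (- (\<i> * complex_of_real t))) / 2"
    using cos_exp_eq[of "complex_of_real t"] by (simp add: cos_of_real)
  moreover have "exp (\<i> * complex_of_real t * 2) = exp (\<i> * complex_of_real t) * exp (\<i> * complex_of_real t)"
    by (simp add: exp_add[symmetric] mult_2_right)
  moreover have "exp (- (\<i> * complex_of_real t)) = inverse (exp (\<i> * complex_of_real t))" by (rule exp_minus)
  moreover have "exp (\<i> * complex_of_real t) \<noteq> 0" by simp
  ultimately show ?thesis
    by (metis (no_types, lifting) add_divide_distrib distrib_left mult.assoc nonzero_mult_div_cancel_left right_inverse times_divide_eq_right)
qed



lemma final_alg:
  fixes \<beta> \<gamma> lam :: real and d :: nat
  shows "exp (- (\<i> * complex_of_real \<gamma> * 2)) * (\<i> * complex_of_real (sin (2 * \<beta>))) / 2 *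
           ((exp (\<i> * complex_of_real \<gamma> * 2 * complex_of_real lam * 2) + 1) / 2) ^ d
       + exp (- (\<i> * complex_of_real \<gamma> * (-2))) * (- \<i> * complex_of_real (sin (2 * \<beta>))) / 2 *
           ((exp (\<i> * complex_of_real \<gamma> * (-2) * complex_of_real lam * 2) + 1) / 2) ^ d
       = complex_of_real (sin (2 * \<beta>) * (cos (2 * \<gamma> * lam)) ^ d * sin (2 * \<gamma> * (1 - real d * lam)))"
proof -
  define t where "t = 2 * \<gamma> * lam"
  define z where "z = 2 * \<gamma> * (real d * lam - 1)"
  define s where "s = complex_of_real (sin (2 * \<beta>))"
  define c where "c = complex_of_real (cos t)"
  have e1: "(exp (\<i> * complex_of_real \<gamma> * 2 * complex_of_real lam * 2) + 1) / 2 = exp (\<i> * complex_of_real t) * c"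
    using half_angle[of t] unfolding c_def t_def by (simp add: mult_ac)
  have e2: "(exp (\<i> * complex_of_real \<gamma> * (-2) * complex_of_real lam * 2) + 1) / 2 = exp (- (\<i> * complex_of_real t)) * c"
    using half_angle[of "-t"] unfolding c_def t_def by (simp add: mult_ac)
  have A: "exp (- (\<i> * complex_of_real \<gamma> * 2)) * exp (\<i> * complex_of_real t) ^ d = exp (\<i> * complex_of_real z)"
    unfolding exp_of_nat_mult[symmetric] exp_add[symmetric] z_def t_def
    by (rule arg_cong[where f=exp]) (simp add: algebra_simps)
  have B: "exp (- (\<i> * complex_of_real \<gamma> * (-2))) * exp (- (\<i> * complex_of_real t)) ^ d = exp (- (\<i> * complex_of_real z))"
    unfolding exp_of_nat_mult[symmetric] exp_add[symmetric] z_def t_def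
    by (rule arg_cong[where f=exp]) (simp add: algebra_simps)
  have S: "exp (\<i> * complex_of_real z) - exp (- (\<i> * complex_of_real z)) = 2 * \<i> * complex_of_real (sin z)"
    using sin_exp_eq[of "complex_of_real z"] by (simp add: sin_of_real field_simps)
  have LHS: "exp (- (\<i> * complex_of_real \<gamma> * 2)) * (\<i> * s) / 2 * (exp (\<i> * complex_of_real t) * c) ^ d
       + exp (- (\<i> * complex_of_real \<gamma> * (-2))) * (- \<i> * s) / 2 * (exp (- (\<i> * complex_of_real t)) * c) ^ d
     = \<i> * s / 2 * c ^ d * ((exp (- (\<i> * complex_of_real \<gamma> * 2)) * exp (\<i> * complex_of_real t) ^ d)
          - (exp (- (\<i> * complex_of_real \<gamma> * (-2))) * exp (- (\<i> * complex_of_real t)) ^ d))"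
    by (simp add: power_mult_distrib algebra_simps)
  also have "\<dots> = - (s * c ^ d * complex_of_real (sin z))"
    unfolding A B S by (simp add: algebra_simps)
  also have "\<dots> = complex_of_real (sin (2 * \<beta>) * (cos (2 * \<gamma> * lam)) ^ d * sin (2 * \<gamma> * (1 - real d * lam)))"
  proof -
    have "sin (2 * \<gamma> * (1 - real d * lam)) = - sin z" unfolding z_def
      by (metis minus_diff_eq mult_minus_right sin_minus)
    then show ?thesis unfolding s_def c_def t_def by simp
  qed
  finally show ?thesis unfolding s_def[symmetric] e1 e2 .
qed



lemma term_b:
  fixes E :: "'n::{finite,linorder} set set" and j :: 'n
  assumes sg: "simple_graph E"
  shows "(\<Sum>w\<in>UNIV. if w j = b then (1/2) ^ CARD('n) * (exp (\<i> * complex_of_real \<gamma> * (Dd b * (-1 + complex_of_real lam * (\<Sum>k\<in>oth j ` {e\<in>E. j \<in> e}. spin (w k) + 1)))) * kj \<beta> b (\<not> b)) else 0)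
    = exp (- (\<i> * complex_of_real \<gamma> * Dd b)) * kj \<beta> b (\<not> b) / 2 *
      ((exp (\<i> * complex_of_real \<gamma> * Dd b * complex_of_real lam * 2) + 1) / 2) ^ degree E j"
proof -
  define N where "N = oth j ` {e\<in>E. j \<in> e}"
  have jN: "j \<notin> N" and cN: "card N = degree E j" using N_props[OF sg] unfolding N_def by auto
  define ep where "ep c = exp (\<i> * complex_of_real \<gamma> * Dd b * complex_of_real lam * (spin c + 1))" for c
  define G where "G i c = (if i = j then (if c = b then exp (- (\<i> * complex_of_real \<gamma> * Dd b)) * kj \<beta> b (\<not> b) / 2 else 0)
      else if i \<in> N then ep c / 2 else 1 / 2)" for i c
  define m where "m = card (UNIV - {j} :: 'n set)"
  have cardU: "CARD('n) = Suc m" unfolding m_def by (simp add: card_Suc_Diff1)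
  have rest: "(\<Prod>i\<in>UNIV-{j}. f i) = (\<Prod>i\<in>N. f i)" if "\<And>i. i \<notin> N \<Longrightarrow> i \<noteq> j \<Longrightarrow> f i = 1" for f :: "'n \<Rightarrow> complex"
  proof -
    have "(\<Prod>i\<in>UNIV-{j}. f i) = (\<Prod>i\<in>UNIV-{j}. if i \<in> N then f i else 1)" using that by (intro prod.cong) auto
    also have "\<dots> = (\<Prod>i\<in>{i\<in>UNIV-{j}. i \<in> N}. f i)" by (rule prod.inter_filter[symmetric]) simp
    also have "{i\<in>UNIV-{j}. i \<in> N} = N" using jN by auto
    finally show ?thesis .
  qed
  have prodrest: "(\<Prod>i\<in>UNIV-{j}. G i (w i)) = (1/2) ^ m * (\<Prod>k\<in>N. ep (w k))" for w :: "'n \<Rightarrow> bool"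
  proof -
    have "(\<Prod>i\<in>UNIV-{j}. G i (w i)) = (\<Prod>i\<in>UNIV-{j}. (1/2) * (if i \<in> N then ep (w i) else 1))"
      by (intro prod.cong) (auto simp: G_def)
    also have "\<dots> = (1/2) ^ m * (\<Prod>i\<in>UNIV-{j}. if i \<in> N then ep (w i) else 1)"
      unfolding prod.distrib prod_constant m_def ..
    also have "(\<Prod>i\<in>UNIV-{j}. if i \<in> N then ep (w i) else 1) = (\<Prod>k\<in>N. ep (w k))"
      by (subst rest) auto
    finally show ?thesis .
  qed
  have summand: "(if w j = b then (1/2) ^ CARD('n) * (exp (\<i> * complex_of_real \<gamma> * (Dd b * (-1 + complex_of_real lam * (\<Sum>k\<in>N. spin (w k) + 1)))) * kj \<beta> b (\<not> b)) else 0)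
     = (\<Prod>i\<in>UNIV. G i (w i))" for w :: "'n \<Rightarrow> bool"
  proof -
    have split: "(\<Prod>i\<in>UNIV. G i (w i)) = G j (w j) * (\<Prod>i\<in>UNIV-{j}. G i (w i))"
      by (subst prod.remove[of _ j]) auto
    show ?thesis
    proof (cases "w j = b")
      case True
      have ex: "exp (\<i> * complex_of_real \<gamma> * (Dd b * (-1 + complex_of_real lam * (\<Sum>k\<in>N. spin (w k) + 1))))
          = exp (- (\<i> * complex_of_real \<gamma> * Dd b)) * (\<Prod>k\<in>N. ep (w k))"
      proof -
        have eqA: "\<i> * complex_of_real \<gamma> * (Dd b * (-1 + complex_of_real lam * (\<Sum>k\<in>N. spin (w k) + 1)))
            = - (\<i> * complex_of_real \<gamma> * Dd b) + (\<Sum>k\<in>N. \<i> * complex_of_real \<gamma> * Dd b * complex_of_real lam * (spin (w k) + 1))"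
          by (simp add: sum_distrib_left algebra_simps)
        show ?thesis unfolding eqA exp_add exp_sum[OF finite] ep_def ..
      qed
      show ?thesis unfolding split prodrest using True unfolding ex cardU G_def
        by (simp add: mult_ac)
    next
      case False then show ?thesis unfolding split by (simp add: G_def)
    qed
  qed
  have "(\<Sum>w\<in>UNIV. if w j = b then (1/2) ^ CARD('n) * (exp (\<i> * complex_of_real \<gamma> * (Dd b * (-1 + complex_of_real lam * (\<Sum>k\<in>N. spin (w k) + 1)))) * kj \<beta> b (\<not> b)) else 0)
     = (\<Sum>w\<in>UNIV. \<Prod>i\<in>UNIV. G i (w i))" using summand by simp
  also have "\<dots> = (\<Prod>i\<in>UNIV. G i True + G i False)" by (rule sum_prod_fun)
  also have "\<dots> = (G j True + G j False) * (\<Prod>i\<in>UNIV-{j}. G i True + G i False)"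
    by (subst prod.remove[of _ j]) auto
  also have "(\<Prod>i\<in>UNIV-{j}. G i True + G i False) = (\<Prod>i\<in>N. G i True + G i False)"
    by (rule rest) (auto simp: G_def jN)
  also have "\<dots> = (\<Prod>i\<in>N. (exp (\<i> * complex_of_real \<gamma> * Dd b * complex_of_real lam * 2) + 1) / 2)"
    using jN by (intro prod.cong) (auto simp: G_def ep_def spin_def add_divide_distrib)
  also have "\<dots> = ((exp (\<i> * complex_of_real \<gamma> * Dd b * complex_of_real lam * 2) + 1) / 2) ^ degree E j"
    by (simp add: cN)
  also have "G j True + G j False = exp (- (\<i> * complex_of_real \<gamma> * Dd b)) * kj \<beta> b (\<not> b) / 2"
    by (cases b) (simp_all add: G_def)
  finally show ?thesis unfolding N_def .
qed

theorem mainTheorem1: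
  fixes E :: "'n::{finite,linorder} set set" and lam \<beta> \<gamma> :: real and j :: 'n
  assumes "simple_graph E"
  shows "expect (qaoa_state E lam \<beta> \<gamma>) (sigma_z j) =
    complex_of_real (sin (2 * \<beta>) * (cos (2 * \<gamma> * lam)) ^ degree E j
                     * sin (2 * \<gamma> * (1 - real (degree E j) * lam)))"
proof -
  define N where "N = oth j ` {e\<in>E. j \<in> e}"
  define X where "X b w = (1/2) ^ CARD('n) * (exp (\<i> * complex_of_real \<gamma> * (Dd b * (-1 + complex_of_real lam * (\<Sum>k\<in>N. spin (w k) + 1)))) * kj \<beta> b (\<not> b))" for b w
  have "expect (qaoa_state E lam \<beta> \<gamma>) (sigma_z j) =
     (\<Sum>w\<in>UNIV. cnj (aa E lam \<gamma> w) * aa E lam \<gamma> w * kj \<beta> (w j) (w j)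
        + cnj (aa E lam \<gamma> w) * aa E lam \<gamma> (w(j := \<not> w j)) * kj \<beta> (w j) (\<not> w j))"
    unfolding expect_K by (intro sum.cong refl sum_KK)
  also have "\<dots> = (\<Sum>w\<in>UNIV. (1/2) ^ CARD('n) * kj \<beta> (w j) (w j)) + (\<Sum>w\<in>UNIV. (if w j = True then X True w else 0) + (if w j = False then X False w else 0))"
    unfolding sum.distrib[symmetric]
  proof (intro sum.cong refl)
    fix w :: "'n \<Rightarrow> bool"
    have "cnj (aa E lam \<gamma> w) * aa E lam \<gamma> (w(j := \<not> w j)) * kj \<beta> (w j) (\<not> w j) = X (w j) w"
      unfolding aa_prod cC_diff[OF assms] X_def N_def by simp
    then show "cnj (aa E lam \<gamma> w) * aa E lam \<gamma> w * kj \<beta> (w j) (w j)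
        + cnj (aa E lam \<gamma> w) * aa E lam \<gamma> (w(j := \<not> w j)) * kj \<beta> (w j) (\<not> w j) =
        (1/2) ^ CARD('n) * kj \<beta> (w j) (w j) + ((if w j = True then X True w else 0) + (if w j = False then X False w else 0))"
      unfolding aa_prod by (cases "w j") simp_all
  qed
  also have "\<dots> = (\<Sum>w\<in>UNIV. if w j = True then X True w else 0) + (\<Sum>w\<in>UNIV. if w j = False then X False w else 0)"
    unfolding first_zero sum.distrib by simp
  also have "\<dots> = exp (- (\<i> * complex_of_real \<gamma> * Dd True)) * kj \<beta> True (\<not> True) / 2 *
      ((exp (\<i> * complex_of_real \<gamma> * Dd True * complex_of_real lam * 2) + 1) / 2) ^ degree E j
    + exp (- (\<i> * complex_of_real \<gamma> * Dd False)) * kj \<beta> False (\<not> False) / 2 *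
      ((exp (\<i> * complex_of_real \<gamma> * Dd False * complex_of_real lam * 2) + 1) / 2) ^ degree E j"
    unfolding X_def N_def term_b[OF assms] ..
  also have "\<dots> = complex_of_real (sin (2 * \<beta>) * (cos (2 * \<gamma> * lam)) ^ degree E j
                     * sin (2 * \<gamma> * (1 - real (degree E j) * lam)))"
    using final_alg[of \<gamma> \<beta> lam "degree E j"] by (simp add: Dd_def spin_def kj_TF kj_FT)
  finally show ?thesis .
qed


end
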